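(* Under the hypotheses of the arrival-bound lemma (all $\lambda_j>0$, $\min_j\lambda_j\Gamma\ge e^{2e}$, $|\sum_{i=1}^kU^j_i-\lambda_j^{-1}k|\le\Gamma\phi(k)$ for all $k\ge1$, $j$), let $P\in\{0,1\}^{J\times J}$ have row sums in $\{0,1\}$ and $P^N=0$ for some $N$, and set $\bar\lambda=(I-P^T)^{-1}\lambda$, $\bar A(t)=(I-P^T)^{-1}A(t)$. Then for every $t\ge\max_j\big(\lambda_j^{-1}e^e,\lambda_j^{-1}+3\lambda_j^{-1}\lambda_{\max}^2\Gamma^2\big)$ and every $j$, $$\phi(\bar A_j(t))\le\big(2+6\lambda_{\max}^2\Gamma^2\big)^{1/2}\phi(\bar\lambda_jt).$$
   Context: $\phi(x)=\sqrt{x\ln\ln x}$ for $x\ge e^e$, $\phi(x)=1$ otherwise. $A_j(t)=\max\{k\ge0:\sum_{i=1}^kU^j_i\le t\}$, $A(t)=(A_j(t))_j$, $\lambda=(\lambda_j)_j$, $\lambda_{\max}=\max_j\lambda_j$. *)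

theory Defs
  imports "HOL-Analysis.Analysis"
begin

definition phi :: "real \<Rightarrow> real" where
  "phi x = (if x \<ge> exp (exp 1) then sqrt (x * ln (ln x)) else 1)"

definition arrivals :: "('n \<Rightarrow> nat \<Rightarrow> real) \<Rightarrow> 'n \<Rightarrow> real \<Rightarrow> nat" where
  "arrivals U j t = (GREATEST k. (\<Sum>i=1..k. U j i) \<le> t)"

definition arrival_vec :: "('n::finite \<Rightarrow> nat \<Rightarrow> real) \<Rightarrow> real \<Rightarrow> real^'n" where
  "arrival_vec U t = (\<chi> j. real (arrivals U j t))"

fun matpow :: "'a::semiring_1^'n^'n \<Rightarrow> nat \<Rightarrow> 'a^'n^'n" where
  "matpow A 0 = mat 1"
| "matpow A (Suc n) = A ** matpow A n"

end

theory Submission imports Defs begin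

lemma ee_ge: "exp (exp 1) \<ge> (1::real)" by simp

lemma lnln_ge1: assumes "(y::real) \<ge> exp (exp 1)" shows "ln (ln y) \<ge> 1"
proof -
  have y0: "y > 0" using less_le_trans[OF exp_gt_zero assms] .
  have "ln y \<ge> ln (exp (exp 1))" using assms y0 by (subst ln_le_cancel_iff) auto
  hence ly: "ln y \<ge> exp 1" by simp
  have "ln (ln y) \<ge> ln (exp 1)" using ly less_le_trans[OF exp_gt_zero ly] by (subst ln_le_cancel_iff) auto
  thus ?thesis by simp
qed

lemma ln_ge_e: assumes "(y::real) \<ge> exp (exp 1)" shows "ln y \<ge> exp 1"
proof -
  have y0: "y > 0" using less_le_trans[OF exp_gt_zero assms] .
  have "ln y \<ge> ln (exp (exp 1))" using assms y0 by (subst ln_le_cancel_iff) auto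
  thus ?thesis by simp
qed

lemma e_ge1: "exp 1 \<ge> (1::real)" by simp

lemma phi_mono: assumes "x \<le> y" shows "phi x \<le> phi y"
proof (cases "y \<ge> exp (exp 1)")
  case True
  have l1: "ln (ln y) \<ge> 1" using lnln_ge1 True .
  have y1: "y \<ge> 1" using True ee_ge by linarith
  show ?thesis
  proof (cases "x \<ge> exp (exp 1)")
    case True2: True
    have "ln (ln x) \<le> ln (ln y)"
    proof -
      have "x > 0" using True2 ee_ge by linarith
      hence "ln x \<le> ln y" using assms by simp
      moreover have "ln x > 0" using ln_ge_e[OF True2] e_ge1 by linarith
      ultimately show ?thesis by simp
    qed
    moreover have "ln (ln x) \<ge> 1" using lnln_ge1 True2 .
    moreover have "0 \<le> y" using assms True2 ee_ge by linarith
    ultimately have "x * ln (ln x) \<le> y * ln (ln y)" using assms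
      by (intro mult_mono) auto
    then show ?thesis using True True2 by (simp add: phi_def)
  next
    case False
    have "1 * 1 \<le> y * ln (ln y)" using y1 l1 by (intro mult_mono) auto
    then show ?thesis using True False by (simp add: phi_def)
  qed
next
  case False
  then show ?thesis using assms by (simp add: phi_def)
qed

lemma phi_scale:
  assumes a: "a \<ge> 1" and y: "y \<ge> exp (exp 1)" and x: "x \<le> a * y"
  shows "phi x \<le> a * phi y"
proof -
  have y1: "y \<ge> 1" using y ee_ge by linarith
  have l1: "ln (ln y) \<ge> 1" using lnln_ge1 y .
  have "1 * y \<le> a * y" using a y1 by (intro mult_right_mono) auto
  hence ay: "a * y \<ge> exp (exp 1)" using y by simp
  have "ln (ln (a*y)) \<le> a * ln (ln y)"
  proof -
    define u where "u = ln y"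
    have u: "u \<ge> exp 1" using ln_ge_e[OF y] unfolding u_def .
    have u1: "u \<ge> 1" using u e_ge1 by linarith
    have la: "ln a \<ge> 0" using a by simp
    have "ln (a*y) = ln a + u" using a y1 unfolding u_def by (simp add: ln_mult)
    also have "\<dots> \<le> u * (1 + ln a)"
    proof -
      have "1 * ln a \<le> u * ln a" using u1 la by (intro mult_right_mono) auto
      thus ?thesis by (simp add: algebra_simps)
    qed
    finally have lay: "ln (a*y) \<le> u * (1 + ln a)" .
    have "ln (a*y) \<ge> exp 1" using ln_ge_e[OF ay] .
    hence "ln (a*y) > 0" using e_ge1 by linarith
    hence "ln (ln (a*y)) \<le> ln (u * (1 + ln a))" using lay by simp
    also have "\<dots> = ln u + ln (1 + ln a)" using u1 la by (simp add: ln_mult)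
    also have "\<dots> \<le> ln u + ln a" using ln_add_one_self_le_self[OF la] by simp
    also have "\<dots> \<le> ln u + (a - 1)" using ln_le_minus_one[of a] a by simp
    also have "\<dots> \<le> ln u + (a - 1) * ln u"
    proof -
      have "(a - 1) * 1 \<le> (a - 1) * ln u" using a l1 unfolding u_def by (intro mult_left_mono) auto
      thus ?thesis by simp
    qed
    also have "\<dots> = a * ln u" by (simp add: algebra_simps)
    finally show ?thesis unfolding u_def .
  qed
  have "phi x \<le> phi (a*y)" using phi_mono x .
  also have "\<dots> = sqrt (a*y * ln (ln (a*y)))" using ay by (simp add: phi_def)
  also have "\<dots> \<le> sqrt (a*y * (a * ln (ln y)))"
    using \<open>ln (ln (a*y)) \<le> a * ln (ln y)\<close> a y1 by (intro real_sqrt_le_mono mult_left_mono) auto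
  also have "\<dots> = sqrt (a^2 * (y * ln (ln y)))" by (simp add: power2_eq_square algebra_simps)
  also have "\<dots> = a * sqrt (y * ln (ln y))" using a by (simp add: real_sqrt_mult)
  also have "\<dots> = a * phi y" using y by (simp add: phi_def)
  finally show ?thesis .
qed

lemma exp_cubic: assumes "(y::real) \<ge> 0" shows "y^3/6 \<le> exp y"
proof -
  obtain s where "exp y = (\<Sum>m<4. (y ^ m) / fact m) + (exp s / fact 4) * y ^ 4"
    using Maclaurin_exp_le[of y 4] by blast
  moreover have "(\<Sum>m<4. (y ^ m) / fact m) = 1 + y + y^2/2 + y^3/6"
    by (simp add: numeral_eq_Suc fact_numeral)
  moreover have "(exp s / fact 4) * y ^ 4 \<ge> 0" using assms by simp
  moreover have "1 + y + y^2/2 \<ge> 0" using assms by simp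
  ultimately show ?thesis by linarith
qed


lemma ln_le_half: assumes "(y::real) > 0" shows "ln y \<le> y / 2"
proof -
  have "ln (y/2) \<le> y/2 - 1" using assms by (intro ln_le_minus_one) auto
  moreover have "ln (y/2) = ln y - ln 2" using assms by (simp add: ln_div)
  ultimately show ?thesis using ln_2_less_1 by linarith
qed

lemma arr_key:
  fixes L \<Gamma> B t S :: real and k :: nat
  assumes L: "L > 0" and G0: "\<Gamma> > 0" and LB: "L*\<Gamma> \<le> B" and B1: "B \<ge> 1"
    and Lt1: "L*t \<ge> exp(exp 1)" and Lt2: "L*t \<ge> 1 + 3*B^2"
    and Sle: "S \<le> t" and Sb: "k \<ge> 1 \<Longrightarrow> \<bar>S - real k / L\<bar> \<le> \<Gamma> * phi (real k)"
  shows "real k \<le> sqrt(2+6*B^2) * (L*t)"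
proof -
  define a where "a = sqrt(2+6*B^2)"
  have Lt0: "L*t > 0" using Lt2 by (smt (verit) zero_le_power2)
  have a2: "a \<ge> 2" unfolding a_def
  proof (rule real_le_rsqrt)
    have "B^2 \<ge> 1" using B1 by simp
    thus "2^2 \<le> 2 + 6*B^2" by simp
  qed
  have a7: "a \<ge> 7/3 * B" unfolding a_def
  proof (rule real_le_rsqrt)
    have "(7/3*B)^2 = 49/9 * B^2" by (simp add: power2_eq_square)
    moreover have "B^2 \<ge> 0" by simp
    ultimately show "(7/3*B)^2 \<le> 2 + 6*B^2" by linarith
  qed
  show ?thesis
  proof (cases "k = 0")
    case True
    then show ?thesis using Lt0 a2 by simp
  next
    case False
    define x where "x = real k"
    have k1: "k \<ge> 1" using False by simp
    have x1: "x \<ge> 1" using k1 unfolding x_def by simp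
    have "x / L \<le> t + \<Gamma> * phi x" using Sb[OF k1] Sle unfolding x_def by linarith
    hence "L * (x / L) \<le> L * (t + \<Gamma> * phi x)" using L by (intro mult_left_mono) auto
    hence main: "x \<le> L*t + (L*\<Gamma>) * phi x" using L by (simp add: algebra_simps)
    show ?thesis unfolding a_def[symmetric] x_def[symmetric]
    proof (rule ccontr)
      assume "\<not> x \<le> a * (L*t)"
      hence xa: "x > a * (L*t)" by simp
      have "1 * (L*t) \<le> a * (L*t)" using a2 Lt0 by (intro mult_right_mono) auto
      hence xLt: "x > L*t" using xa by simp
      show False
      proof (cases "x \<ge> exp (exp 1)")
        case False
        then show ?thesis using xLt Lt1 by simp
      next
        case True
        define ll where "ll = ln (ln x)"
        have ll1: "ll \<ge> 1" unfolding ll_def using lnln_ge1[OF True] .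
        have phx: "phi x = sqrt (x * ll)" using True by (simp add: phi_def ll_def)
        have "2 * (L*t) \<le> a * (L*t)" using a2 Lt0 by (intro mult_right_mono) auto
        hence "L*t < x/2" using xa by simp
        hence "x/2 < (L*\<Gamma>) * phi x" using main by simp
        also have "\<dots> \<le> B * phi x" using LB phx x1 ll1 by (intro mult_right_mono) auto
        finally have h1: "x/2 < B * sqrt (x*ll)" using phx by simp
        have "(x/2)^2 < (B * sqrt (x*ll))^2" using h1 x1 by (intro power_strict_mono) auto
        also have "\<dots> = B^2 * (x*ll)" using x1 ll1 by (simp add: power_mult_distrib)
        finally have "x * x < x * (4*B^2*ll)" by (simp add: power2_eq_square algebra_simps)
        hence xB: "x < 4*B^2*ll" using x1 by simp
        have "a * (L*t) \<ge> (7/3*B) * (3*B^2)"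
          using mult_mono[OF a7, of "3*B^2" "L*t"] Lt2 B1 a2 by simp
        hence "7*B^3 < x" using xa by (simp add: power2_eq_square power3_eq_cube)
        hence "B^2 * (7*B) < B^2 * (4*ll)" using xB by (simp add: power2_eq_square power3_eq_cube algebra_simps)
        hence B7: "7*B < 4*ll" using B1 by simp
        have "x < 4*B^2*ll" by (fact xB)
        also have "\<dots> \<le> 4*(4*ll/7)^2*ll"
        proof -
          have "B \<le> 4*ll/7" using B7 by simp
          hence "B^2 \<le> (4*ll/7)^2" using B1 by (intro power_mono) auto
          thus ?thesis using ll1 by simp
        qed
        also have "\<dots> = 64/49 * ll^3" by (simp add: power2_eq_square power3_eq_cube)
        finally have xll: "x < 64/49 * ll^3" .
        define y where "y = ln x"
        have y0: "y > 0" using x1 True unfolding y_def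
          using ln_ge_e[OF True] e_ge1 by linarith
        have xy: "x = exp y" unfolding y_def using x1 by simp
        have "ll \<le> y/2" unfolding ll_def y_def[symmetric] using ln_le_half[OF y0] .
        hence "ll^3 \<le> (y/2)^3" using ll1 by (intro power_mono) auto
        hence "x < 64/49 * (y/2)^3" using xll by simp
        also have "\<dots> \<le> y^3/6" using y0 by (simp add: power_divide)
        also have "\<dots> \<le> x" using exp_cubic[of y] y0 xy by simp
        finally show False by simp
      qed
    qed
  qed
qed


lemma matpow_commute: "matpow A n ** A = A ** matpow A n"
proof (induction n)
  case 0 then show ?case by simp
next
  case (Suc n)
  have "matpow A (Suc n) ** A = A ** (matpow A n ** A)" by (simp add: matrix_mul_assoc)
  also have "\<dots> = A ** matpow A (Suc n)" using Suc by simp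
  finally show ?case .
qed

lemma matpow_transpose: "matpow (transpose (A::'a::comm_semiring_1^'n^'n)) n = transpose (matpow A n)"
proof (induction n)
  case 0 then show ?case by simp
next
  case (Suc n)
  have "matpow (transpose A) (Suc n) = transpose A ** transpose (matpow A n)" using Suc by simp
  also have "\<dots> = transpose (matpow A n ** A)" by (simp add: matrix_transpose_mul)
  also have "\<dots> = transpose (matpow A (Suc n))" by (simp add: matpow_commute)
  finally show ?case .
qed

lemma matrix_sub_rdistrib: "((A::'a::ring_1^'n^'m) - B) ** C = A ** C - B ** C"
  by (vector matrix_matrix_mult_def sum_subtractf algebra_simps)

lemma matrix_sub_ldistrib: "(A::'a::ring_1^'n^'m) ** (B - C) = A ** B - A ** C"
  by (vector matrix_matrix_mult_def sum_subtractf algebra_simps)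

lemma neumann: "(mat 1 - (Q::'a::ring_1^'n^'n)) ** (\<Sum>n<N. matpow Q n) = mat 1 - matpow Q N"
proof (induction N)
  case 0 then show ?case by simp
next
  case (Suc N)
  have "(mat 1 - Q) ** (\<Sum>n<Suc N. matpow Q n) = (mat 1 - Q) ** (\<Sum>n<N. matpow Q n) + (mat 1 - Q) ** matpow Q N"
    by (simp add: matrix_add_ldistrib)
  also have "\<dots> = mat 1 - matpow Q (Suc N)" using Suc by (simp add: matrix_sub_rdistrib)
  finally show ?case .
qed

lemma matpow_nonneg: assumes "\<forall>i j. (A::real^'n^'n) $ i $ j \<ge> 0" shows "matpow A n $ i $ j \<ge> 0"
proof (induction n arbitrary: i j)
  case 0 then show ?case by (simp add: mat_def)
next
  case (Suc n)
  then show ?case using assms by (simp add: matrix_matrix_mult_def sum_nonneg)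
qed

lemma sum_matrix_component: "(\<Sum>n\<in>S. (f n :: 'a::semiring_1^'m^'n)) $ i $ j = (\<Sum>n\<in>S. f n $ i $ j)"
  by (induction S rule: infinite_finite_induct) auto

lemma matrix_inv_eq:
  fixes A S :: "real^'n^'n"
  assumes "A ** S = mat 1"
  shows "matrix_inv A = S"
proof -
  have SA: "S ** A = mat 1" using assms matrix_left_right_inverse by blast
  have ex: "\<exists>X. A ** X = mat 1 \<and> X ** A = mat 1" using assms SA by blast
  define X where "X = matrix_inv A"
  have X: "A ** X = mat 1 \<and> X ** A = mat 1" unfolding X_def matrix_inv_def using someI_ex[OF ex] .
  have "X = X ** (A ** S)" using assms by simp
  also have "\<dots> = (X ** A) ** S" by (simp add: matrix_mul_assoc)
  also have "\<dots> = S" using X by simp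
  finally show ?thesis unfolding X_def .
qed


theorem mainTheorem8:
  fixes lambda :: "real^'n::finite"
    and U :: "'n \<Rightarrow> nat \<Rightarrow> real"
    and \<Gamma> :: real
    and P :: "real^'n^'n"
    and t :: real
    and j :: 'n
  assumes lam_pos: "\<forall>i. lambda $ i > 0"
    and lam_Gamma: "(MIN i. lambda $ i) * \<Gamma> \<ge> exp (2 * exp 1)"
    and U_bound: "\<forall>i. \<forall>k::nat. k \<ge> 1 \<longrightarrow>
                    \<bar>(\<Sum>m=1..k. U i m) - real k / lambda $ i\<bar> \<le> \<Gamma> * phi (real k)"
    and P_01: "\<forall>i l. P $ i $ l = 0 \<or> P $ i $ l = 1"
    and P_rows: "\<forall>i. (\<Sum>l\<in>UNIV. P $ i $ l) = 0 \<or> (\<Sum>l\<in>UNIV. P $ i $ l) = 1"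
    and P_nilp: "\<exists>N. matpow P N = 0"
    and t_ge: "\<forall>i. t \<ge> exp (exp 1) / lambda $ i
                 \<and> t \<ge> 1 / lambda $ i + 3 * (MAX l. lambda $ l)^2 * \<Gamma>^2 / lambda $ i"
  shows "phi ((matrix_inv (mat 1 - transpose P) *v arrival_vec U t) $ j)
         \<le> sqrt (2 + 6 * (MAX l. lambda $ l)^2 * \<Gamma>^2)
           * phi ((matrix_inv (mat 1 - transpose P) *v lambda) $ j * t)"
proof -
  define lmin where "lmin = (MIN i. lambda $ i)"
  define lmax where "lmax = (MAX i. lambda $ i)"
  define B where "B = lmax * \<Gamma>"
  define a where "a = sqrt (2 + 6 * B^2)"
  have lmin_le: "lmin \<le> lambda $ i" for i unfolding lmin_def by simp
  have lmax_ge: "lambda $ i \<le> lmax" for i unfolding lmax_def by simp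
  have lmin_in: "lmin \<in> range (\<lambda>i. lambda $ i)" unfolding lmin_def by (rule Min_in) auto
  then obtain i0 where "lmin = lambda $ i0" by auto
  hence lmin0: "lmin > 0" using lam_pos by simp
  have e2: "exp (2 * exp 1) \<ge> (1::real)" by simp
  have lG: "lmin * \<Gamma> \<ge> 1" using lam_Gamma e2 unfolding lmin_def by linarith
  have G0: "\<Gamma> > 0"
  proof (rule ccontr)
    assume "\<not> \<Gamma> > 0"
    hence "lmin * \<Gamma> \<le> 0" using lmin0 by (simp add: mult_nonneg_nonpos less_imp_le)
    thus False using lG by simp
  qed
  have LB: "lambda $ i * \<Gamma> \<le> B" for i unfolding B_def using lmax_ge[of i] G0 by (intro mult_right_mono) auto
  have B1: "B \<ge> 1" using LB[of i0] lG \<open>lmin = lambda $ i0\<close> by simp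
  have a_eq: "sqrt (2 + 6 * (MAX l. lambda $ l)^2 * \<Gamma>^2) = a"
    unfolding a_def B_def lmax_def by (simp add: power_mult_distrib mult.assoc)
  have a1: "a \<ge> 1" unfolding a_def by (rule real_le_rsqrt) (use B1 in simp)
  have Lt1: "lambda $ i * t \<ge> exp (exp 1)" for i
    using t_ge lam_pos[rule_format, of i] by (simp add: divide_le_eq mult.commute)
  have Lt2: "lambda $ i * t \<ge> 1 + 3 * B^2" for i
  proof -
    have "t \<ge> (1 + 3 * B^2) / lambda $ i"
      using t_ge[rule_format, of i] unfolding B_def lmax_def by (simp add: add_divide_distrib power_mult_distrib mult.assoc)
    thus ?thesis using lam_pos[rule_format, of i] by (simp add: divide_le_eq mult.commute)
  qed
  have arr: "real (arrivals U i t) \<le> a * (lambda $ i * t)" for i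
  proof -
    define Pr where "Pr = (\<lambda>k. (\<Sum>m=1..k. U i m) \<le> t)"
    have key: "real k \<le> a * (lambda $ i * t)" if "Pr k" for k
      unfolding a_def
      by (rule arr_key[OF lam_pos[rule_format, of i] G0 LB B1 Lt1 Lt2, of "\<Sum>m=1..k. U i m"])
         (use that U_bound in \<open>auto simp: Pr_def\<close>)
    have bnd: "y \<le> nat (ceiling (a * (lambda $ i * t)))" if "Pr y" for y
      using key[OF that] by linarith
    have "0 < lambda $ i * t" using less_le_trans[OF exp_gt_zero Lt1[of i]] .
    hence "t > 0" using lam_pos[rule_format, of i] by (simp add: zero_less_mult_iff)
    hence "Pr 0" unfolding Pr_def by simp
    have "Pr (Greatest Pr)" by (rule GreatestI_nat[where P=Pr, OF \<open>Pr 0\<close> bnd])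
    hence "real (Greatest Pr) \<le> a * (lambda $ i * t)" by (rule key)
    thus ?thesis unfolding arrivals_def Pr_def by simp
  qed
  define Q where "Q = transpose P"
  obtain N where N: "matpow P N = 0" using P_nilp by blast
  have QN: "matpow Q N = 0" unfolding Q_def matpow_transpose N by (simp add: transpose_def zero_vec_def)
  define S where "S = (\<Sum>n<N. matpow Q n)"
  have "(mat 1 - Q) ** S = mat 1" unfolding S_def neumann QN by simp
  hence M: "matrix_inv (mat 1 - Q) = S" by (rule matrix_inv_eq)
  have Qnn: "\<forall>i l. Q $ i $ l \<ge> 0" unfolding Q_def using P_01 by (auto simp: transpose_def) (metis order_refl zero_le_one)
  have Snn: "S $ i $ l \<ge> 0" for i l unfolding S_def sum_matrix_component
    by (rule sum_nonneg) (use matpow_nonneg[OF Qnn] in auto)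
  have N0: "N \<noteq> 0"
  proof
    assume "N = 0"
    hence "mat 1 = (0::real^'n^'n)" using N by simp
    hence "(mat 1 :: real^'n^'n) $ j $ j = 0" by simp
    thus False by (simp add: mat_def)
  qed
  have Sjj: "S $ j $ j \<ge> 1"
  proof -
    have "matpow Q 0 $ j $ j \<le> (\<Sum>n<N. matpow Q n $ j $ j)"
      using N0 by (intro member_le_sum) (auto intro: matpow_nonneg[OF Qnn])
    thus ?thesis unfolding S_def sum_matrix_component by (simp add: mat_def)
  qed
  define lb where "lb = (S *v lambda) $ j"
  have lb_eq: "lb = (\<Sum>i\<in>UNIV. S $ j $ i * lambda $ i)" unfolding lb_def by (simp add: matrix_vector_mult_def)
  have "S $ j $ j * lambda $ j \<le> lb" unfolding lb_eq
    using Snn lam_pos by (intro member_le_sum) (simp_all add: less_imp_le)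
  moreover have "lambda $ j \<le> S $ j $ j * lambda $ j" using Sjj lam_pos[rule_format, of j]
    by (simp add: mult_le_cancel_right1 less_imp_le)
  ultimately have "lambda $ j \<le> lb" by linarith
  moreover have "0 < lambda $ j * t" using less_le_trans[OF exp_gt_zero Lt1[of j]] .
  hence "t > 0" using lam_pos[rule_format, of j] by (simp add: zero_less_mult_iff)
  ultimately have "lambda $ j * t \<le> lb * t" by (intro mult_right_mono) auto
  hence lbt: "lb * t \<ge> exp (exp 1)" using Lt1[of j] by linarith
  define x where "x = (S *v arrival_vec U t) $ j"
  have "x = (\<Sum>i\<in>UNIV. S $ j $ i * real (arrivals U i t))"
    unfolding x_def by (simp add: matrix_vector_mult_def arrival_vec_def)
  also have "\<dots> \<le> (\<Sum>i\<in>UNIV. S $ j $ i * (a * (lambda $ i * t)))"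
    using Snn arr by (intro sum_mono mult_left_mono) auto
  also have "\<dots> = a * (lb * t)" unfolding lb_eq by (simp add: sum_distrib_left sum_distrib_right algebra_simps)
  finally have "x \<le> a * (lb * t)" .
  hence "phi x \<le> a * phi (lb * t)" using phi_scale[OF a1 lbt] by blast
  thus ?thesis unfolding a_eq x_def lb_def M[unfolded Q_def] .
qed

end
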